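(* If the second-order Lagrangian $L$ is homogeneous, then its Hilbert forms satisfy $i^i_l\vartheta^m=0$, $i^{ij}_l\vartheta^m=0$ and $i^{ijk}_l\vartheta^m=0$ for all indices $i,j,k,l,m\in\{1,2\}$.
   Context: Let $E$ be a smooth manifold of dimension $n$ with local coordinates $(u^\alpha)$. For $k\ge 1$, $\mathcal F^k_{(2)}E$ denotes the bundle of $k$-th order 2-frames in $E$ (regular $k$-th order 2-velocities, i.e. $k$-jets at $0$ of maps $\mathbb R^2\to E$ of rank 2 at $0$), with induced coordinates $u^\alpha_{i_1\cdots i_s}$ ($0\le s\le k$, indices in $\{1,2\}$, totally symmetric in the subscripts). Pull-backs along the projections $\mathcal F^l_{(2)}E\to\mathcal F^k_{(2)}E$ are omitted. $\#(i_1\cdots i_s)$ denotes the number of distinct rearrangements of $(i_1,\dots,i_s)$; repeated indices in $\{1,2\}$ are summed. The total derivatives are the vector fields along $\mathcal F^{k+1}_{(2)}E\to\mathcal F^k_{(2)}E$ given by $\mathbf T_i=\sum_{s=0}^k \frac{1}{\#(i_1\cdots i_s)}u^\alpha_{i i_1\cdots i_s}\,\partial/\partial u^\alpha_{i_1\cdots i_s}$, and the vertical endomorphisms are the type $(1,1)$ tensor fields on $\mathcal F^{k+1}_{(2)}E$ given by $S^j=\sum_{s=0}^k \frac{s+1}{\#(i_1\cdots i_s)}\,\partial/\partial u^\alpha_{j i_1\cdots i_s}\otimes du^\alpha_{i_1\cdots i_s}$. The $S^i$ commute and $S^{i_1\cdots i_s}$ denotes their composite. On forms, $S^i$ acts as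 the degree-zero derivation $(S^i\omega)(X_1,\dots,X_r)=\sum_a \omega(X_1,\dots,S^iX_a,\dots,X_r)$ (zero on functions). The fundamental vector fields are $\Delta^{i_1\cdots i_s}_i=S^{i_1\cdots i_s}(\mathbf T_i)$, well-defined vector fields on $\mathcal F^{k+1}_{(2)}E$. Contraction with $\mathbf T_i$ and with $\Delta^{i_1\cdots i_s}_i$ is denoted $i_i$ and $i^{i_1\cdots i_s}_i$; the corresponding Lie derivatives are $d_i=d\,i_i+i_i\,d$ and $d^{i_1\cdots i_s}_i=d\,i^{i_1\cdots i_s}_i+i^{i_1\cdots i_s}_i d$. The $d_i$ commute and $d_{j_1\cdots j_s}$ denotes their composite. A second-order Lagrangian is a smooth function $L$ on (an open subset of) $\mathcal F^2_{(2)}E$; it is homogeneous if $d^i_jL=\delta^i_jL$ and $d^{ik}_jL=0$ for all $i,j,k$. Its Hilbert forms are the 1-forms $\vartheta^i=(S^i-\tfrac12 d_jS^{ji})\,dL$ on $\mathcal F^3_{(2)}E$. *)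

theory Defs
  imports "HOL-Analysis.Analysis"
begin

text \<open>A symmetric multi-index (i_1 ... i_s) with entries in {1,2} and s \<le> 3 is
  determined by the pair (a,b) = (number of 1's, number of 2's).\<close>

typedef mi = "{(a::nat, b::nat). a + b \<le> 3}"
  by (rule exI[of _ "(0,0)"]) simp

instance mi :: finite
proof
  have "finite {(a::nat, b::nat). a + b \<le> 3}"
    by (rule finite_subset[of _ "{..3} \<times> {..3}"]) auto
  then show "finite (UNIV :: mi set)"
  proof -
    have "UNIV = Abs_mi ` {(a::nat, b::nat). a + b \<le> 3}"
      using type_definition.Abs_image[OF type_definition_mi] by simp
    then show "finite (UNIV :: mi set)" using \<open>finite _\<close> by (metis finite_imageI)
  qed
qed

definition deg :: "mi \<Rightarrow> nat" where
  "deg I = fst (Rep_mi I) + snd (Rep_mi I)"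

definition up :: "nat \<Rightarrow> nat \<times> nat \<Rightarrow> nat \<times> nat" where
  "up j p = (if j = 1 then (fst p + 1, snd p) else (fst p, snd p + 1))"

definition down :: "nat \<Rightarrow> nat \<times> nat \<Rightarrow> nat \<times> nat" where
  "down j p = (if j = 1 then (fst p - 1, snd p) else (fst p, snd p - 1))"

definition contains :: "nat \<Rightarrow> nat \<times> nat \<Rightarrow> bool" where
  "contains j p = (if j = 1 then 1 \<le> fst p else 1 \<le> snd p)"

text \<open>Points of (a coordinate chart of) F^3_(2) E: the coordinate u^\<alpha>_I is  x $ (\<alpha>, I).
  'n indexes the coordinates of E (dim E = CARD('n)).\<close>
type_synonym 'n pt = "real ^ ('n \<times> mi)"

text \<open>Vector fields and 1-forms are given by their components w.r.t.
  \<partial>/\<partial>u^\<alpha>_I and du^\<alpha>_I; 2-forms by Omega(A,B) with Omega(X,Y) = sum X^A Y^B Omega(A,B).\<close>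
type_synonym 'n vfield = "'n pt \<Rightarrow> 'n \<times> mi \<Rightarrow> real"
type_synonym 'n form1 = "'n pt \<Rightarrow> 'n \<times> mi \<Rightarrow> real"
type_synonym 'n form2 = "'n pt \<Rightarrow> 'n \<times> mi \<Rightarrow> 'n \<times> mi \<Rightarrow> real"

definition pd :: "'n::finite \<times> mi \<Rightarrow> ('n pt \<Rightarrow> real) \<Rightarrow> 'n pt \<Rightarrow> real" where
  "pd c f x = frechet_derivative f (at x) (axis c 1)"

fun Ck :: "nat \<Rightarrow> 'a::euclidean_space set \<Rightarrow> ('a \<Rightarrow> real) \<Rightarrow> bool" where
  "Ck 0 W f = continuous_on W f"
| "Ck (Suc k) W f = ((\<forall>x\<in>W. f differentiable (at x)) \<and>
      (\<forall>b\<in>Basis. Ck k W (\<lambda>x. frechet_derivative f (at x) b)))"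

definition smooth_on :: "'a::euclidean_space set \<Rightarrow> ('a \<Rightarrow> real) \<Rightarrow> bool" where
  "smooth_on W f = (\<forall>k. Ck k W f)"

definition dfun :: "('n::finite pt \<Rightarrow> real) \<Rightarrow> 'n form1" where
  "dfun f x c = pd c f x"

definition contract :: "'n::finite form1 \<Rightarrow> 'n vfield \<Rightarrow> 'n pt \<Rightarrow> real" where
  "contract \<omega> X x = (\<Sum>c\<in>UNIV. \<omega> x c * X x c)"

definition dform :: "'n::finite form1 \<Rightarrow> 'n form2" where
  "dform \<omega> x A B = pd A (\<lambda>y. \<omega> y B) x - pd B (\<lambda>y. \<omega> y A) x"

definition contract2 :: "'n::finite vfield \<Rightarrow> 'n form2 \<Rightarrow> 'n form1" where
  "contract2 X \<Omega> x B = (\<Sum>A\<in>UNIV. X x A * \<Omega> x A B)"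

text \<open>Lie derivative of a function f along X (= i_X df) and of a 1-form (Cartan: d i_X + i_X d).\<close>
definition lie_fun :: "'n::finite vfield \<Rightarrow> ('n pt \<Rightarrow> real) \<Rightarrow> 'n pt \<Rightarrow> real" where
  "lie_fun X f = contract (dfun f) X"

definition lie_form :: "'n::finite vfield \<Rightarrow> 'n form1 \<Rightarrow> 'n form1" where
  "lie_form X \<omega> x B = dfun (contract \<omega> X) x B + contract2 X (dform \<omega>) x B"

text \<open>The vertical endomorphism S^j of F^3, acting on vector fields:
  S^j (\<partial>/\<partial>u_K) = (|K|+1) \<partial>/\<partial>u_{jK} for |K| \<le> 2, and 0 for |K| = 3.\<close>
definition Svf :: "nat \<Rightarrow> 'n::finite vfield \<Rightarrow> 'n vfield" where
  "Svf j X x c = (let p = Rep_mi (snd c) in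
     if contains j p then real (deg (snd c)) * X x (fst c, Abs_mi (down j p)) else 0)"

text \<open>... and on 1-forms, as degree-zero derivation: (S^j \<omega>)(X) = \<omega>(S^j X).\<close>
definition Sform :: "nat \<Rightarrow> 'n::finite form1 \<Rightarrow> 'n form1" where
  "Sform j \<omega> x c = (if deg (snd c) \<le> 2
     then real (deg (snd c) + 1) * \<omega> x (fst c, Abs_mi (up j (Rep_mi (snd c)))) else 0)"

text \<open>The total derivative T_l = sum_K u_{lK} \<partial>/\<partial>u_K, a vector field along
  F^4 \<rightarrow> F^3.  Its components with |K| \<le> 2 are functions on F^3; we keep exactly
  these (truncation).  This truncation does not change S^j T_l, nor contractions
  with (differentials of) forms pulled back from F^2, which is all that is used.\<close>
definition Ttot :: "nat \<Rightarrow> 'n::finite vfield" where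
  "Ttot l x c = (if deg (snd c) \<le> 2 then x $ (fst c, Abs_mi (up l (Rep_mi (snd c)))) else 0)"

definition Delta :: "nat list \<Rightarrow> nat \<Rightarrow> 'n::finite vfield" where
  "Delta I l = foldr Svf I (Ttot l)"

definition dtot :: "nat \<Rightarrow> 'n::finite form1 \<Rightarrow> 'n form1" where
  "dtot j \<omega> = lie_form (Ttot j) \<omega>"

definition hilbert :: "('n::finite pt \<Rightarrow> real) \<Rightarrow> nat \<Rightarrow> 'n form1" where
  "hilbert L i x c = Sform i (dfun L) x c
     - (1/2) * (\<Sum>j\<in>{1,2}. dtot j (Sform j (Sform i (dfun L))) x c)"

definition homogeneous_on :: "'n::finite pt set \<Rightarrow> ('n pt \<Rightarrow> real) \<Rightarrow> bool" where
  "homogeneous_on W L = (\<forall>x\<in>W.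
     (\<forall>i\<in>{1,2}. \<forall>j\<in>{1,2}. lie_fun (Delta [i] j) L x = (if i = j then L x else 0)) \<and>
     (\<forall>i\<in>{1,2}. \<forall>j\<in>{1,2}. \<forall>k\<in>{1,2}. lie_fun (Delta [i,k] j) L x = 0))"

definition regular :: "'n::finite pt \<Rightarrow> bool" where
  "regular x = (\<forall>c1 c2::real. (\<forall>\<alpha>. c1 * x $ (\<alpha>, Abs_mi (1,0)) + c2 * x $ (\<alpha>, Abs_mi (0,1)) = 0)
                   \<longrightarrow> c1 = 0 \<and> c2 = 0)"

text \<open>W is the preimage of an open subset of F^2 and L is (the pull-back of) a
  function on that subset: W and L depend only on coordinates of order \<le> 2.\<close>
definition second_order_on :: "'n::finite pt set \<Rightarrow> ('n pt \<Rightarrow> real) \<Rightarrow> bool" where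
  "second_order_on W L = (\<forall>x\<in>W. \<forall>y. (\<forall>c. deg (snd c) \<le> 2 \<longrightarrow> y $ c = x $ c)
       \<longrightarrow> y \<in> W \<and> L y = L x)"

end

theory Submission
  imports Defs
begin

definition "m00 = Abs_mi (0,0)"
definition "m10 = Abs_mi (1,0)"
definition "m01 = Abs_mi (0,1)"
definition "m20 = Abs_mi (2,0)"
definition "m11 = Abs_mi (1,1)"
definition "m02 = Abs_mi (0,2)"
definition "m30 = Abs_mi (3,0)"
definition "m21 = Abs_mi (2,1)"
definition "m12 = Abs_mi (1,2)"
definition "m03 = Abs_mi (0,3)"

lemmas mdefs = m00_def m10_def m01_def m20_def m11_def m02_def m30_def m21_def m12_def m03_def

lemma Rep_m [simp]: "Rep_mi m00 = (0,0)" "Rep_mi m10 = (1,0)" "Rep_mi m01 = (0,1)"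
  "Rep_mi m20 = (2,0)" "Rep_mi m11 = (1,1)" "Rep_mi m02 = (0,2)"
  "Rep_mi m30 = (3,0)" "Rep_mi m21 = (2,1)" "Rep_mi m12 = (1,2)" "Rep_mi m03 = (0,3)"
  by (simp_all add: mdefs Abs_mi_inverse)

lemma Abs_m [simp]: "Abs_mi (0,0) = m00" "Abs_mi (1,0) = m10" "Abs_mi (0,1) = m01"
  "Abs_mi (2,0) = m20" "Abs_mi (1,1) = m11" "Abs_mi (0,2) = m02"
  "Abs_mi (3,0) = m30" "Abs_mi (2,1) = m21" "Abs_mi (1,2) = m12" "Abs_mi (0,3) = m03"
  by (simp_all add: mdefs)

lemma Abs_m' [simp]: "Abs_mi (Suc 0,0) = m10" "Abs_mi (0,Suc 0) = m01"
  "Abs_mi (Suc 0,Suc 0) = m11" "Abs_mi (2,Suc 0) = m21" "Abs_mi (Suc 0,2) = m12"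
  by (simp_all add: mdefs)

lemma deg_m [simp]: "deg m00 = 0" "deg m10 = 1" "deg m01 = 1"
  "deg m20 = 2" "deg m11 = 2" "deg m02 = 2"
  "deg m30 = 3" "deg m21 = 3" "deg m12 = 3" "deg m03 = 3"
  by (simp_all add: deg_def)

lemma m_neq [simp]: "m00 \<noteq> m10" "m00 \<noteq> m01" "m00 \<noteq> m20" "m00 \<noteq> m11" "m00 \<noteq> m02" "m00 \<noteq> m30" "m00 \<noteq> m21" "m00 \<noteq> m12" "m00 \<noteq> m03" "m10 \<noteq> m01" "m10 \<noteq> m20" "m10 \<noteq> m11" "m10 \<noteq> m02" "m10 \<noteq> m30" "m10 \<noteq> m21" "m10 \<noteq> m12" "m10 \<noteq> m03" "m01 \<noteq> m20" "m01 \<noteq> m11" "m01 \<noteq> m02" "m01 \<noteq> m30" "m01 \<noteq> m21" "m01 \<noteq> m12" "m01 \<noteq> m03" "m20 \<noteq> m11" "m20 \<noteq> m02" "m20 \<noteq> m30" "m20 \<noteq> m21" "m20 \<noteq> m12" "m20 \<noteq> m03" "m11 \<noteq> m02" "m11 \<noteq> m30" "m11 \<noteq> m21" "m11 \<noteq> m12" "m11 \<noteq> m03" "m02 \<noteq> m30" "m02 \<noteq> m21" "m02 \<noteq> m12" "m02 \<noteq> m03" "m30 \<noteq> m21" "m30 \<noteq> m12" "m30 \<noteq> m03" "m21 \<noteq> m12" "m21 \<noteq> m03" "m12 \<noteq> m03"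
  by (auto dest!: arg_cong[where f=Rep_mi])

lemmas m_neq' [simp] = m_neq[THEN not_sym]

lemma m_distinct: "distinct [m00,m10,m01,m20,m11,m02,m30,m21,m12,m03]"
  by (auto dest!: arg_cong[where f=Rep_mi])

lemma mi_cases: "K = m00 \<or> K = m10 \<or> K = m01 \<or> K = m20 \<or> K = m11 \<or> K = m02 \<or> K = m30 \<or> K = m21 \<or> K = m12 \<or> K = m03"
proof -
  obtain a b where ab: "Rep_mi K = (a,b)" "a + b \<le> 3" using Rep_mi by fastforce
  have K: "K = Abs_mi (a,b)" using ab(1) by (metis Rep_mi_inverse)
  have "(a,b) = (0,0) \<or> (a,b) = (1,0) \<or> (a,b) = (0,1) \<or> (a,b) = (2,0) \<or> (a,b) = (1,1) \<or> (a,b) = (0,2) \<or> (a,b) = (3,0) \<or> (a,b) = (2,1) \<or> (a,b) = (1,2) \<or> (a,b) = (0,3)"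
    using ab(2) by (cases a; cases b; auto simp: numeral_eq_Suc; presburger?)
  then show ?thesis unfolding K by (elim disjE) (simp_all only: Abs_m prod.inject simp_thms)
qed

lemma UNIV_mi: "(UNIV :: mi set) = {m00,m10,m01,m20,m11,m02,m30,m21,m12,m03}"
  using mi_cases by blast

lemma sum_mi: "(\<Sum>K\<in>UNIV. f K) = f m00 + f m10 + f m01 + f m20 + f m11 + f m02 + f m30 + f m21 + f m12 + f m03"
  by (simp add: UNIV_mi add.assoc)

lemma sum_pair: "(\<Sum>c\<in>(UNIV::('a::finite \<times> 'b::finite) set). f c) = (\<Sum>a\<in>UNIV. \<Sum>b\<in>UNIV. f (a,b))"
  by (simp add: sum.cartesian_product)

lemma pd_hasd: "(f has_derivative f') (at x) \<Longrightarrow> pd c f x = f' (axis c 1)"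
  unfolding pd_def using frechet_derivative_at by metis

lemma pd_cong: assumes "open W" "x \<in> W" "\<And>y. y \<in> W \<Longrightarrow> f y = g y"
  shows "pd c f x = pd c g x"
proof -
  have "\<And>f'. (f has_derivative f') (at x) \<longleftrightarrow> (g has_derivative f') (at x)"
    using has_derivative_transform_within_open[OF _ assms(1,2)] assms(3) by metis
  then show ?thesis unfolding pd_def frechet_derivative_def by simp
qed

lemma pd_const: "pd c (\<lambda>y. a) x = 0"
  by (rule trans[OF pd_hasd[OF has_derivative_const]]) simp


lemma hd_nth: "((\<lambda>x. x $ i) has_derivative (\<lambda>y. y $ i)) F"
  using bounded_linear_vec_nth by (rule bounded_linear.has_derivative) (rule has_derivative_ident)

lemma up_tab [simp]: "up (Suc 0) (0,0) = ((Suc 0),0)" "up (Suc 0) (0,(Suc 0)) = ((Suc 0),(Suc 0))" "up (Suc 0) (0,2) = ((Suc 0),2)" "up (Suc 0) ((Suc 0),0) = (2,0)" "up (Suc 0) ((Suc 0),(Suc 0)) = (2,(Suc 0))" "up (Suc 0) (2,0) = (3,0)" "up 2 (0,0) = (0,(Suc 0))" "up 2 (0,(Suc 0)) = (0,2)" "up 2 (0,2) = (0,3)" "up 2 ((Suc 0),0) = ((Suc 0),(Suc 0))" "up 2 ((Suc 0),(Suc 0)) = ((Suc 0),2)" "up 2 (2,0) = (2,(Suc 0))"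
  by (simp_all add: up_def)

lemma contains_tab [simp]: "\<not> contains (Suc 0) (0,0)" "\<not> contains (Suc 0) (0,(Suc 0))" "\<not> contains (Suc 0) (0,2)" "\<not> contains (Suc 0) (0,3)" "contains (Suc 0) ((Suc 0),0)" "contains (Suc 0) ((Suc 0),(Suc 0))" "contains (Suc 0) ((Suc 0),2)" "contains (Suc 0) (2,0)" "contains (Suc 0) (2,(Suc 0))" "contains (Suc 0) (3,0)" "\<not> contains 2 (0,0)" "contains 2 (0,(Suc 0))" "contains 2 (0,2)" "contains 2 (0,3)" "\<not> contains 2 ((Suc 0),0)" "contains 2 ((Suc 0),(Suc 0))" "contains 2 ((Suc 0),2)" "\<not> contains 2 (2,0)" "contains 2 (2,(Suc 0))" "\<not> contains 2 (3,0)"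
  by (simp_all add: contains_def)

lemma down_tab [simp]: "down (Suc 0) ((Suc 0),0) = (0,0)" "down (Suc 0) ((Suc 0),(Suc 0)) = (0,(Suc 0))" "down (Suc 0) ((Suc 0),2) = (0,2)" "down (Suc 0) (2,0) = ((Suc 0),0)" "down (Suc 0) (2,(Suc 0)) = ((Suc 0),(Suc 0))" "down (Suc 0) (3,0) = (2,0)" "down 2 (0,(Suc 0)) = (0,0)" "down 2 (0,2) = (0,(Suc 0))" "down 2 (0,3) = (0,2)" "down 2 ((Suc 0),(Suc 0)) = ((Suc 0),0)" "down 2 ((Suc 0),2) = ((Suc 0),(Suc 0))" "down 2 (2,(Suc 0)) = (2,0)"
  by (simp_all add: down_def)

lemma sum2: "(\<Sum>a\<in>A. f a * (2 * g a)) = 2 * (\<Sum>a\<in>A. f a * (g a::real))"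
  by (simp add: sum_distrib_left mult.left_commute)

lemma Basis_axis: "axis c (1::real) \<in> Basis" by simp

context
  fixes W :: "'n::finite pt set" and L :: "'n pt \<Rightarrow> real"
  assumes oW: "open W" and so: "second_order_on W L" and sm: "smooth_on W L"
begin

lemma Ck2: "Ck 2 W L" using sm unfolding smooth_on_def by blast

lemma L_diff: "y \<in> W \<Longrightarrow> L differentiable (at y)"
  using Ck2 by (simp add: numeral_2_eq_2)

lemma pdL_diff: "y \<in> W \<Longrightarrow> (pd c L) differentiable (at y)"
proof -
  assume y: "y \<in> W"
  have "Ck 1 W (\<lambda>x. frechet_derivative L (at x) (axis c 1))"
    using Ck2 Basis_axis by (simp add: numeral_2_eq_2)
  then show ?thesis using y by (simp add: pd_def[abs_def])
qed

lemma pd3: assumes y: "y \<in> W" and d: "deg K = 3" shows "pd (\<beta>, K) L y = 0"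
proof -
  define D where "D = frechet_derivative L (at y)"
  define v :: "'n pt" where "v = axis (\<beta>,K) 1"
  have hD: "(L has_derivative D) (at y)" using L_diff[OF y] frechet_derivative_works D_def by blast
  have lin: "((\<lambda>t::real. y + t *\<^sub>R v) has_derivative (\<lambda>t. t *\<^sub>R v)) (at 0)"
    by (auto intro!: derivative_eq_intros)
  have hD': "(L has_derivative D) (at ((\<lambda>t::real. y + t *\<^sub>R v) 0))" using hD by simp
  have comp: "((\<lambda>t. L (y + t *\<^sub>R v)) has_derivative (\<lambda>t. D (t *\<^sub>R v))) (at 0)"
    using has_derivative_compose[OF lin hD'] by simp
  have const: "(\<lambda>t. L (y + t *\<^sub>R v)) = (\<lambda>t. L y)"
  proof
    fix t :: real
    have "\<forall>c. deg (snd c) \<le> 2 \<longrightarrow> (y + t *\<^sub>R v) $ c = y $ c"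
      using d by (auto simp: v_def axis_def)
    then show "L (y + t *\<^sub>R v) = L y" using so y unfolding second_order_on_def by blast
  qed
  have "((\<lambda>t. L (y + t *\<^sub>R v)) has_derivative (\<lambda>t. 0)) (at (0::real))"
    unfolding const by (rule has_derivative_const)
  with comp have "(\<lambda>t. D (t *\<^sub>R v)) = (\<lambda>t. 0)" using has_derivative_unique by blast
  then have "D (1 *\<^sub>R v) = 0" by metis
  then show ?thesis by (simp add: pd_def D_def v_def)
qed


lemma lie_abstract:
  fixes \<omega> :: "'n form1" and X :: "'n vfield" and Q :: "'n \<Rightarrow> 'n pt \<Rightarrow> real"
  assumes h1: "\<And>y A. y \<in> W \<Longrightarrow> deg (snd A) \<ge> 1 \<Longrightarrow> \<omega> y A = 0"
    and h2: "\<And>y \<alpha>. \<omega> y (\<alpha>, m00) = 2 * Q \<alpha> y"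
    and h3: "\<And>y \<alpha>. X y (\<alpha>, m00) = y $ (\<alpha>, J)"
    and h4: "\<And>\<alpha>. Q \<alpha> differentiable (at x)"
    and x: "x \<in> W" and dK: "deg K \<ge> 1"
  shows "lie_form X \<omega> x (\<beta>, K) = (if K = J then 2 * Q \<beta> x else 0)"
proof -
  define Q' where "Q' \<alpha> = frechet_derivative (Q \<alpha>) (at x)" for \<alpha>
  have hQ: "(Q \<alpha> has_derivative Q' \<alpha>) (at x)" for \<alpha>
    unfolding Q'_def using h4[of \<alpha>] frechet_derivative_works by blast
  have c: "contract \<omega> X y = (\<Sum>\<alpha>\<in>UNIV. 2 * Q \<alpha> y * y $ (\<alpha>, J))" if y: "y \<in> W" for y
    unfolding contract_def sum_pair sum_mi using h1[OF y] by (simp add: h2 h3)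
  have "pd (\<beta>, K) (contract \<omega> X) x = pd (\<beta>, K) (\<lambda>y. \<Sum>\<alpha>\<in>UNIV. 2 * Q \<alpha> y * y $ (\<alpha>, J)) x"
    by (rule pd_cong[OF oW x]) (simp add: c)
  also have "\<dots> = (\<Sum>\<alpha>\<in>UNIV. 2 * (Q' \<alpha> (axis (\<beta>, K) 1) * x $ (\<alpha>, J) + Q \<alpha> x * axis (\<beta>, K) 1 $ (\<alpha>, J)))"
    by (rule pd_hasd) (auto intro!: derivative_eq_intros hQ hd_nth simp: algebra_simps)
  finally have P1: "pd (\<beta>, K) (contract \<omega> X) x = (\<Sum>\<alpha>\<in>UNIV. 2 * (Q' \<alpha> (axis (\<beta>, K) 1) * x $ (\<alpha>, J) + Q \<alpha> x * axis (\<beta>, K) 1 $ (\<alpha>, J)))" .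
  have P2: "pd A (\<lambda>y. \<omega> y (\<beta>, K)) x = 0" for A
    using pd_cong[OF oW x, of "\<lambda>y. \<omega> y (\<beta>, K)" "\<lambda>y. 0"] h1 dK pd_const by simp
  have P3: "pd (\<beta>, K) (\<lambda>y. \<omega> y A) x = 0" if "deg (snd A) \<ge> 1" for A
    using pd_cong[OF oW x, of "\<lambda>y. \<omega> y A" "\<lambda>y. 0"] h1 that pd_const by simp
  have P4: "pd (\<beta>, K) (\<lambda>y. \<omega> y (\<alpha>, m00)) x = 2 * Q' \<alpha> (axis (\<beta>, K) 1)" for \<alpha>
    unfolding h2 by (rule pd_hasd) (auto intro!: derivative_eq_intros hQ)
  have C2: "contract2 X (dform \<omega>) x (\<beta>, K) = (\<Sum>\<alpha>\<in>UNIV. x $ (\<alpha>, J) * (- (2 * Q' \<alpha> (axis (\<beta>, K) 1))))"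
    unfolding contract2_def dform_def sum_pair sum_mi by (simp add: P2 P3 P4 h3)
  have "lie_form X \<omega> x (\<beta>, K) = (\<Sum>\<alpha>\<in>UNIV. 2 * Q \<alpha> x * axis (\<beta>, K) 1 $ (\<alpha>, J))"
    unfolding lie_form_def dfun_def C2 P1 by (simp add: algebra_simps sum.distrib sum_negf)
  also have "\<dots> = (if K = J then 2 * Q \<beta> x else 0)"
    by (simp add: axis_def if_distrib cong: if_cong)
  finally show ?thesis .
qed


lemma omega_zero:
  assumes y: "y \<in> W" and j: "j \<in> {1,2}" and m: "m \<in> {1,2}" and d: "deg (snd A) \<ge> 1"
  shows "Sform j (Sform m (dfun L)) y A = 0"
proof -
  obtain \<alpha> K where A: "A = (\<alpha>, K)" by fastforce
  have jj: "j = 1 \<or> j = 2" and mm: "m = 1 \<or> m = 2" using j m by auto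
  show ?thesis using mi_cases[of K] jj mm d unfolding A
    by (elim disjE; simp add: Sform_def dfun_def pd3[OF y])
qed

lemma omega0:
  assumes j: "j \<in> {1,2}" and m: "m \<in> {1,2}"
  shows "Sform j (Sform m (dfun L)) y (\<alpha>, m00) = 2 * pd (\<alpha>, Abs_mi (up m (up j (0,0)))) L y"
proof -
  have jj: "j = 1 \<or> j = 2" and mm: "m = 1 \<or> m = 2" using j m by auto
  show ?thesis using jj mm by (elim disjE; simp add: Sform_def dfun_def)
qed

lemma Ttot0: "Ttot j y (\<alpha>, m00) = y $ (\<alpha>, Abs_mi (up j (0,0)))"
  by (simp add: Ttot_def)

lemma dtot_formula:
  assumes x: "x \<in> W" and j: "j \<in> {1,2}" and m: "m \<in> {1,2}" and dK: "deg K \<ge> 1"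
  shows "dtot j (Sform j (Sform m (dfun L))) x (\<beta>, K) =
    (if K = Abs_mi (up j (0,0)) then 2 * pd (\<beta>, Abs_mi (up m (up j (0,0)))) L x else 0)"
  unfolding dtot_def
  by (rule lie_abstract[where Q="\<lambda>\<alpha>. pd (\<alpha>, Abs_mi (up m (up j (0,0)))) L"])
     (use x dK omega_zero[OF _ j m] omega0[OF j m] Ttot0 pdL_diff in auto)

lemma hilbert_formula:
  assumes x: "x \<in> W" and m: "m \<in> {1,2}" and dK: "deg K \<ge> 1"
  shows "hilbert L m x (\<beta>, K) = (if deg K = 1 then pd (\<beta>, Abs_mi (up m (Rep_mi K))) L x else 0)"
proof -
  have mm: "m = 1 \<or> m = 2" using m by auto
  have e: "(\<Sum>j\<in>{1,2}. dtot j (Sform j (Sform m (dfun L))) x (\<beta>, K)) =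
     dtot 1 (Sform 1 (Sform m (dfun L))) x (\<beta>, K) + dtot 2 (Sform 2 (Sform m (dfun L))) x (\<beta>, K)"
    by simp
  show ?thesis unfolding hilbert_def e dtot_formula[OF x insertI1 m dK] dtot_formula[OF x insertI2[OF singletonI] m dK]
    using mi_cases[of K] mm dK by (elim disjE; simp add: Sform_def dfun_def pd3[OF x])
qed





lemma Dz: "Delta (a#I) l x (\<beta>, m00) = 0"
  by (simp add: Delta_def Svf_def contains_def Let_def)

lemma ctr_formula:
  assumes x: "x \<in> W" and m: "m \<in> {1,2}"
  shows "contract (hilbert L m) (Delta (a#I) l) x =
    (\<Sum>\<beta>\<in>UNIV. hilbert L m x (\<beta>, m10) * Delta (a#I) l x (\<beta>, m10) + hilbert L m x (\<beta>, m01) * Delta (a#I) l x (\<beta>, m01))"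
proof -
  have z: "hilbert L m x (\<beta>, K) = 0" if "deg K \<ge> 2" for \<beta> K
    using hilbert_formula[OF x m, of K \<beta>] that by simp
  show ?thesis unfolding contract_def sum_pair sum_mi by (simp add: z Dz)
qed

lemma D2: assumes "i \<in> {1,2}" "K = m10 \<or> K = m01"
  shows "Delta (i#j#I) l x (\<beta>, K) = 0"
proof -
  have "Svf j (foldr Svf I (Ttot l)) x (\<beta>, m00) = 0" by (simp add: Svf_def contains_def Let_def)
  then show ?thesis using assms by (auto simp: Delta_def Svf_def)
qed

lemma main_at:
  assumes hom: "homogeneous_on W L" and x: "x \<in> W"
    and i: "i \<in> {1,2}" and j: "j \<in> {1,2}" and k: "k \<in> {1,2}" and l: "l \<in> {1,2}" and m: "m \<in> {1,2}"
  shows "contract (hilbert L m) (Delta [i] l) x = 0 \<and>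
           contract (hilbert L m) (Delta [i,j] l) x = 0 \<and>
           contract (hilbert L m) (Delta [i,j,k] l) x = 0"
proof -
  have c2: "contract (hilbert L m) (Delta [i,j] l) x = 0"
    unfolding ctr_formula[OF x m] by (simp add: D2[OF i])
  have c3: "contract (hilbert L m) (Delta [i,j,k] l) x = 0"
    unfolding ctr_formula[OF x m] by (simp add: D2[OF i])
  have H: "lie_fun (Delta [i,m] l) L x = 0" using hom x i m l unfolding homogeneous_on_def by blast
  have ii: "i = 1 \<or> i = 2" and ll: "l = 1 \<or> l = 2" and mm: "m = 1 \<or> m = 2" using i l m by auto
  have hv1: "hilbert L m x (\<beta>, m10) = pd (\<beta>, Abs_mi (up m (Suc 0, 0))) L x" for \<beta>
    using hilbert_formula[OF x m, of m10] by simp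
  have hv2: "hilbert L m x (\<beta>, m01) = pd (\<beta>, Abs_mi (up m (0, Suc 0))) L x" for \<beta>
    using hilbert_formula[OF x m, of m01] by simp
  have "contract (hilbert L m) (Delta [i] l) x = 0"
    unfolding ctr_formula[OF x m] hv1 hv2 using ii ll mm H
    by (elim disjE; simp add: sum2 Delta_def Svf_def Ttot_def lie_fun_def contract_def
          dfun_def sum_pair sum_mi pd3[OF x])
  with c2 c3 show ?thesis by blast
qed

end
theorem lemma2:
  fixes W :: "'n::finite pt set" and L :: "'n pt \<Rightarrow> real"
  assumes "open W"
    and "\<forall>x\<in>W. regular x"
    and "second_order_on W L"
    and "smooth_on W L"
    and "homogeneous_on W L"
  shows "\<forall>x\<in>W. \<forall>i\<in>{1,2}. \<forall>j\<in>{1,2}. \<forall>k\<in>{1,2}. \<forall>l\<in>{1,2}. \<forall>m\<in>{1,2}.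
           contract (hilbert L m) (Delta [i] l) x = 0 \<and>
           contract (hilbert L m) (Delta [i,j] l) x = 0 \<and>
           contract (hilbert L m) (Delta [i,j,k] l) x = 0"
  using main_at[OF assms(1,3,4,5)] by blast

end
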